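(* Let $0<\mu<L_{\max}^{-1}$ with $L_{\max}=\max_i\|A_i\|_2^2$, let $\{x^n\}$ be generated by GAITA (as in the context) from an arbitrary $x^0\in\mathbf{R}^N$, and let $x^*$ be any limit point of $\{x^n\}$. Then there exists a positive integer $n^*>N$ such that for all $n>n^*$: (a) for every $j=1,\dots,N$, either $x_j^n=0$ or $|x_j^n|\geq\eta_{\mu,q}$; (b) $Supp(x^n)=Supp(x^* )$; (c) $sgn(x^n)=sgn(x^* )$ (componentwise).
   Context: Let $A\in\mathbf{R}^{m\times N}$ have columns $A_1,\dots,A_N$, $y\in\mathbf{R}^m$, $\lambda>0$, $q\in(0,1)$, and $T_\lambda(x)=\frac12\|Ax-y\|_2^2+\lambda\sum_{i=1}^N|x_i|^q$. For a step size $\mu>0$ set $\tau_{\mu,q}=\frac{2-q}{2-2q}(2\lambda\mu(1-q))^{\frac{1}{2-q}}$ and $\eta_{\mu,q}=(2\lambda\mu(1-q))^{\frac{1}{2-q}}$. For $z\in\mathbf{R}$ let $prox_{\mu,\lambda|\cdot|^q}(z)=\arg\min_{v\in\mathbf{R}}\{\frac{(z-v)^2}{2\mu}+\lambda|v|^q\}$ (a single point when $|z|\neq\tau_{\mu,q}$). Define $\mathcal{T}(z,w)$ as the unique element of $prox_{\mu,\lambda|\cdot|^q}(z)$ if $|z|\neq\tau_{\mu,q}$, and, if $|z|=\tau_{\mu,q}$, as $sgn(z)\eta_{\mu,q}$ when $w\neq0$ and $0$ when $w=0$. GAITA: given $x^0\in\mathbf{R}^N$, for $n=0,1,2,\dots$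 let $i=(n\bmod N)+1$, $z_i^n=x_i^n-\mu A_i^T(Ax^n-y)$, $x_i^{n+1}=\mathcal{T}(z_i^n,x_i^n)$, $x_j^{n+1}=x_j^n$ for $j\neq i$. $Supp(x)=\{i:x_i\neq0\}$, $sgn(0)=0$. *)

theory Defs
  imports "HOL-Analysis.Analysis"
begin

(* Conventions: A is an m x N real matrix given as A k j (row k < m, column j < N);
   vectors in R^N are functions nat => real, only coordinates j < N matter.
   Coordinates are 0-indexed: the paper's coordinate i corresponds to i-1 here. *)

definition tau_mq :: "real \<Rightarrow> real \<Rightarrow> real \<Rightarrow> real" where
  "tau_mq lam mu q = (2 - q) / (2 - 2*q) * (2*lam*mu*(1-q)) powr (1/(2-q))"

definition eta_mq :: "real \<Rightarrow> real \<Rightarrow> real \<Rightarrow> real" where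
  "eta_mq lam mu q = (2*lam*mu*(1-q)) powr (1/(2-q))"

definition prox_q :: "real \<Rightarrow> real \<Rightarrow> real \<Rightarrow> real \<Rightarrow> real set" where
  "prox_q lam mu q z = {v. \<forall>u. (z - v)^2 / (2*mu) + lam * \<bar>v\<bar> powr q
                              \<le> (z - u)^2 / (2*mu) + lam * \<bar>u\<bar> powr q}"

definition Tq :: "real \<Rightarrow> real \<Rightarrow> real \<Rightarrow> real \<Rightarrow> real \<Rightarrow> real" where
  "Tq lam mu q z w =
     (if \<bar>z\<bar> \<noteq> tau_mq lam mu q then (THE v. v \<in> prox_q lam mu q z)
      else if w \<noteq> 0 then sgn z * eta_mq lam mu q else 0)"

definition col_norm2 :: "nat \<Rightarrow> (nat \<Rightarrow> nat \<Rightarrow> real) \<Rightarrow> nat \<Rightarrow> real" where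
  "col_norm2 m A j = (\<Sum>k<m. (A k j)^2)"

definition Lmax :: "nat \<Rightarrow> nat \<Rightarrow> (nat \<Rightarrow> nat \<Rightarrow> real) \<Rightarrow> real" where
  "Lmax m N A = Max ((\<lambda>j. col_norm2 m A j) ` {..<N})"

definition is_gaita :: "nat \<Rightarrow> nat \<Rightarrow> (nat \<Rightarrow> nat \<Rightarrow> real) \<Rightarrow> (nat \<Rightarrow> real)
    \<Rightarrow> real \<Rightarrow> real \<Rightarrow> real \<Rightarrow> (nat \<Rightarrow> nat \<Rightarrow> real) \<Rightarrow> bool" where
  "is_gaita m N A y lam q mu x \<longleftrightarrow>
     (\<forall>n. \<forall>j<N. x (Suc n) j =
        (if j = n mod N then
           Tq lam mu q
              (x n j - mu * (\<Sum>k<m. A k j * ((\<Sum>l<N. A k l * x n l) - y k)))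
              (x n j)
         else x n j))"

definition is_limit_point :: "nat \<Rightarrow> (nat \<Rightarrow> nat \<Rightarrow> real) \<Rightarrow> (nat \<Rightarrow> real) \<Rightarrow> bool" where
  "is_limit_point N x xs \<longleftrightarrow>
     (\<exists>r. strict_mono r \<and> (\<forall>j<N. (\<lambda>k. x (r k) j) \<longlonglongrightarrow> xs j))"

definition supp :: "nat \<Rightarrow> (nat \<Rightarrow> real) \<Rightarrow> nat set" where
  "supp N v = {j. j < N \<and> v j \<noteq> 0}"

end

theory Submission
  imports Defs
begin


lemma powr_tangent:
  fixes r x y :: real
  assumes "r \<le> 0" "x > 0" "y > 0"
  shows "y powr r - x powr r \<ge> r * x powr (r - 1) * (y - x)"
proof -
  have cv: "convex_on {0<..} (\<lambda>t::real. t powr r)"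
    apply (rule f''_ge0_imp_convex[where f'="\<lambda>t. r * t powr (r - 1)" and f''="\<lambda>t. r * ((r-1) * t powr (r - 1 - 1))"])
    apply simp
      apply (auto intro!: derivative_eq_intros)
    using assms(1) by (intro mult_nonpos_nonpos) (auto simp: mult_nonpos_nonneg)
  show ?thesis
    using assms
    by (intro convex_on_imp_above_tangent[OF cv, where f'="r * x powr (r - 1)"])
       (auto intro!: derivative_eq_intros simp: interior_open)
qed

locale prx =
  fixes lam mu q :: real
  assumes lam: "lam > 0" and mu: "mu > 0" and q0: "0 < q" and q1: "q < 1"
begin

definition "f z v = (z - v)^2 / (2*mu) + lam * \<bar>v\<bar> powr q"
definition "a = 2*lam*mu*(1-q)"
abbreviation "eta \<equiv> eta_mq lam mu q"
abbreviation "tau \<equiv> tau_mq lam mu q"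

lemma prox_f: "prox_q lam mu q z = {v. \<forall>u. f z v \<le> f z u}"
  by (simp add: prox_q_def f_def)

lemma a_pos: "a > 0" using lam mu q1 by (simp add: a_def)
lemma eta_def': "eta = a powr (1/(2-q))" by (simp add: eta_mq_def a_def)
lemma eta_pos: "eta > 0" using a_pos by (simp add: eta_def')
lemma tau_eq: "tau = (2-q)/(2-2*q) * eta" by (simp add: tau_mq_def eta_mq_def)
lemma tau_pos: "tau > 0" using eta_pos q1 by (simp add: tau_eq)
lemma eta_pow: "eta powr (2-q) = a"
  using a_pos q1 by (simp add: eta_def' powr_powr)
lemma eta_pow2: "eta powr (q-2) = 1/a"
proof -
  have "eta powr (q-2) = inverse (eta powr (2-q))" by (simp add: powr_minus[symmetric])
  thus ?thesis by (simp add: eta_pow divide_inverse)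
qed
lemma eta_pow1: "eta powr (q-1) = eta/a"
proof -
  have "eta powr (q-1) = eta powr ((q-2)+1)" by simp
  also have "\<dots> = eta powr (q-2) * eta powr 1" by (rule powr_add)
  finally have "eta powr (q-1) = eta powr (q-2) * eta powr 1" .
  thus ?thesis using eta_pos by (simp add: eta_pow2)
qed
lemma eta_powq: "eta powr q = eta^2/a"
proof -
  have "eta powr q = eta powr (q-2) * eta powr 2" by (simp add: powr_add[symmetric])
  thus ?thesis using eta_pos by (simp add: eta_pow2 powr_numeral)
qed

lemma key:
  assumes v: "v > 0"
  shows "v^2/(2*mu) + lam * v powr q \<ge> v * tau / mu"
proof -
  have t: "v powr (q-1) - eta powr (q-1) \<ge> (q-1) * eta powr (q-1-1) * (v - eta)"
    using powr_tangent[of "q-1" eta v] q1 eta_pos v by simp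
  have "q - 1 - 1 = q - 2" by simp
  hence t1: "v powr (q-1) \<ge> eta/a + (q-1) * (1/a) * (v - eta)"
    using t by (simp add: eta_pow1 eta_pow2)
  have "(q-1) * (1/a) * (v - eta) = -((1-q) * (v - eta) / a)" using a_pos by (simp add: field_simps)
  hence t2: "v powr (q-1) \<ge> eta/a - (1-q) * (v - eta) / a" using t1 by linarith
  have "v powr q = v powr ((q-1)+1)" by simp
  also have "\<dots> = v powr (q-1) * v powr 1" by (rule powr_add)
  finally have vq: "v powr q = v powr (q-1) * v" using v by simp
  have "lam * v powr q \<ge> lam * v * (eta/a - (1-q) * (v - eta) / a)"
    using t2 v lam by (simp add: vq mult.commute mult.left_commute)
  also have "lam * v * (eta/a - (1-q) * (v - eta) / a) = (lam/a) * (v * eta - (1-q) * v * (v - eta))"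
    using a_pos by (simp add: field_simps)
  also have "lam/a = 1/(2*mu*(1-q))" using lam mu q1 by (simp add: a_def field_simps)
  also have "1/(2*mu*(1-q)) * (v * eta - (1-q) * v * (v - eta)) = v *eta/(2*mu*(1-q)) - v *(v-eta)/(2*mu)"
    using mu q1 by (simp add: field_simps)
  finally have "lam * v powr q \<ge> v *eta/(2*mu*(1-q)) - v *(v-eta)/(2*mu)" .
  moreover have "v * tau / mu = v *eta/(2*mu*(1-q)) + v *eta/(2*mu)"
    using mu q1 by (simp add: tau_eq field_simps)
  moreover have "v^2/(2*mu) - v *(v-eta)/(2*mu) = v *eta/(2*mu)"
    using mu by (simp add: field_simps power2_eq_square)
  ultimately show ?thesis by linarith
qed

lemma key_eq: "eta^2/(2*mu) + lam * eta powr q = eta * tau / mu"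
  using mu q1 lam by (simp add: eta_powq tau_eq a_def field_simps power2_eq_square)

lemma L0: "f z v - f z 0 \<ge> (abs v) * (tau - (abs z)) / mu"
proof (cases "v = 0")
  case True thus ?thesis by (simp add: f_def)
next
  case False
  hence "(abs v) > 0" by simp
  from key[OF this] have k: "(abs v)^2/(2*mu) + lam * (abs v) powr q \<ge> (abs v) * tau / mu" .
  have "z * v \<le> (abs z) * (abs v)" by (metis abs_ge_self abs_mult)
  hence "z * v / mu \<le> (abs z) * (abs v) / mu" using mu by (simp add: divide_right_mono)
  moreover have "f z v - f z 0 = (abs v)^2/(2*mu) + lam * (abs v) powr q - z* v/mu"
    using mu by (simp add: f_def field_simps power2_eq_square)
  moreover have "(abs v) * (tau - (abs z)) / mu = (abs v) * tau / mu - \<bar>z\<bar> * \<bar>v\<bar> / mu"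
    by (simp add: right_diff_distrib diff_divide_distrib mult.commute)
  ultimately show ?thesis using k by linarith
qed

end
 context prx begin
lemma f_sym: "f (-z) (-v) = f z v"
  by (simp add: f_def power2_commute)

lemma prox_neg: "v \<in> prox_q lam mu q z \<longleftrightarrow> -v \<in> prox_q lam mu q (-z)"
proof -
  have "(\<forall>u. f z v \<le> f z u) \<longleftrightarrow> (\<forall>u. f (-z) (-v) \<le> f (-z) u)"
    by (metis f_sym minus_minus)
  thus ?thesis by (simp add: prox_f)
qed

lemma f_cont: "continuous_on UNIV (f z)"
  unfolding f_def
  by (intro continuous_intros continuous_on_powr') (use q0 mu in auto)

lemma clamp: "f z (max (-\<bar>z\<bar>) (min \<bar>z\<bar> u)) \<le> f z u"
proof -
  define c where "c = max (-\<bar>z\<bar>) (min \<bar>z\<bar> u)"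
  have "\<bar>c\<bar> \<le> \<bar>u\<bar>" by (auto simp: c_def)
  hence 1: "\<bar>c\<bar> powr q \<le> \<bar>u\<bar> powr q" using q0 by (intro powr_mono2) auto
  have "\<bar>z - c\<bar> \<le> \<bar>z - u\<bar>" by (auto simp: c_def)
  hence "(z - c)^2 \<le> (z - u)^2"
    by (metis abs_ge_zero power2_abs power_mono)
  hence "(z - c)^2/(2*mu) \<le> (z - u)^2/(2*mu)" using mu by (simp add: divide_right_mono)
  with 1 lam show ?thesis unfolding c_def[symmetric] f_def
    by (smt (verit) mult_left_mono)
qed

lemma prox_ex: "\<exists>v. v \<in> prox_q lam mu q z"
proof -
  have "\<exists>x\<in>{-\<bar>z\<bar>..\<bar>z\<bar>}. \<forall>y\<in>{-\<bar>z\<bar>..\<bar>z\<bar>}. f z x \<le> f z y"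
    by (rule continuous_attains_inf) (auto intro: continuous_on_subset[OF f_cont])
  then obtain v where v: "\<forall>y\<in>{-\<bar>z\<bar>..\<bar>z\<bar>}. f z v \<le> f z y" by blast
  have "f z v \<le> f z u" for u
  proof -
    have "max (-\<bar>z\<bar>) (min \<bar>z\<bar> u) \<in> {-\<bar>z\<bar>..\<bar>z\<bar>}" by auto
    hence "f z v \<le> f z (max (-\<bar>z\<bar>) (min \<bar>z\<bar> u))" using v by blast
    with clamp[of z u] show ?thesis by linarith
  qed
  thus ?thesis by (auto simp: prox_f)
qed

lemma small: assumes "\<bar>z\<bar> < tau" shows "prox_q lam mu q z = {0}"
proof -
  have pos: "f z v - f z 0 > 0" if "v \<noteq> 0" for v
  proof -
    have "\<bar>v\<bar> * (tau - \<bar>z\<bar>) / mu > 0" using that assms mu by simp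
    with L0[where z=z and v=v] show ?thesis by linarith
  qed
  have "0 \<in> prox_q lam mu q z"
    unfolding prox_f using pos by (smt (verit) mem_Collect_eq)
  moreover have "v = 0" if "v \<in> prox_q lam mu q z" for v
  proof (rule ccontr)
    assume "v \<noteq> 0" hence "f z v - f z 0 > 0" by (rule pos)
    moreover have "f z v \<le> f z 0" using that by (simp add: prox_f)
    ultimately show False by linarith
  qed
  ultimately show ?thesis by blast
qed

lemma tie: assumes "\<bar>z\<bar> = tau"
  shows "0 \<in> prox_q lam mu q z" "sgn z * eta \<in> prox_q lam mu q z"
proof -
  have z0: "f z 0 \<le> f z u" for u using L0[where z=z and v=u] assms by simp
  thus "0 \<in> prox_q lam mu q z" by (simp add: prox_f)
  have "z \<noteq> 0" using assms tau_pos by auto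
  hence zs: "z * sgn z = tau" using assms by (simp add: abs_sgn mult.commute)
  have "\<bar>sgn z * eta\<bar> = eta" using \<open>z \<noteq> 0\<close> eta_pos by (simp add: abs_mult abs_sgn_eq)
  hence "f z (sgn z * eta) - f z 0 = eta^2/(2*mu) - (z * sgn z) * eta / mu + lam * eta powr q"
    using mu \<open>z \<noteq> 0\<close> by (simp add: f_def field_simps power2_eq_square sgn_if)
  also have "\<dots> = 0"
  proof -
    have "tau * eta / mu = eta * tau / mu" by simp
    thus ?thesis using key_eq unfolding zs by (smt (verit))
  qed
  finally show "sgn z * eta \<in> prox_q lam mu q z" using z0 by (simp add: prox_f)
qed

end
context prx begin
lemma vq: "v > 0 \<Longrightarrow> v powr q = v powr (q-1) * v"
proof -
  assume v: "v > 0"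
  have "v powr q = v powr ((q-1)+1)" by simp
  also have "\<dots> = v powr (q-1) * v powr 1" by (rule powr_add)
  finally show ?thesis using v by simp
qed

lemma stat:
  assumes v: "v > 0" and p: "v \<in> prox_q lam mu q z"
  shows "z = v + lam * mu * q * v powr (q-1)"
proof -
  define g where "g u = (z-u)^2/(2*mu) + lam * u powr q" for u
  have d: "DERIV g v :> ((v - z)/mu + lam * (q * v powr (q-1)))"
    unfolding g_def using v mu
    by (auto intro!: derivative_eq_intros simp: field_simps power2_eq_square)
  have "\<forall>y. \<bar>v - y\<bar> < v \<longrightarrow> g v \<le> g y"
  proof (intro allI impI)
    fix y assume "\<bar>v - y\<bar> < v"
    hence "y > 0" by auto
    with v p have "f z v \<le> f z y" by (simp add: prox_f)
    thus "g v \<le> g y" using v \<open>y > 0\<close> by (simp add: f_def g_def)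
  qed
  from DERIV_local_min[OF d v this] have "(v - z)/mu + lam * (q * v powr (q-1)) = 0" .
  thus ?thesis using mu by (simp add: field_simps)
qed

lemma big_pos:
  assumes z: "z > tau" and p: "v \<in> prox_q lam mu q z"
  shows "v \<ge> eta"
proof -
  have pf: "f z v \<le> f z u" for u using p by (simp add: prox_f)
  have "f z eta - f z 0 = eta^2/(2*mu) - z * eta / mu + lam * eta powr q"
    using mu eta_pos by (simp add: f_def field_simps power2_eq_square)
  also have "\<dots> = eta * tau / mu - z * eta / mu" using key_eq by (smt (verit))
  also have "\<dots> = eta * (tau - z) / mu" by (simp add: right_diff_distrib diff_divide_distrib mult.commute)
  also have "\<dots> < 0" using z eta_pos mu by (simp add: divide_neg_pos mult_pos_neg)
  finally have "v \<noteq> 0" using pf[of eta] by auto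
  have "\<not> v < 0"
  proof
    assume "v < 0"
    have "v * z < 0" using \<open>v < 0\<close> z tau_pos by (simp add: mult_neg_pos)
    hence "(z - (-v))^2 < (z - v)^2" by (simp add: power2_eq_square algebra_simps)
    hence "(z - (-v))^2/(2*mu) < (z - v)^2/(2*mu)" using mu by (simp add: divide_strict_right_mono)
    hence "f z (-v) < f z v" unfolding f_def by simp
    with pf[of "-v"] show False by simp
  qed
  with \<open>v \<noteq> 0\<close> have v: "v > 0" by simp
  define pp where "pp = v powr (q-1)"
  have pp: "pp > 0" using v by (simp add: pp_def)
  have zz: "z = v + lam * mu * q * pp" using stat[OF v p] by (simp add: pp_def)
  have "f z v - f z 0 = v^2/(2*mu) - z * v/mu + lam * (pp * v)"
    using v mu vq[OF v] by (simp add: f_def pp_def field_simps power2_eq_square)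
  also have "\<dots> = v * (a * pp - v) / (2*mu)"
    using mu by (simp add: zz a_def field_simps power2_eq_square)
  finally have "v * (a * pp - v) / (2*mu) \<le> 0" using pf[of 0] by simp
  hence "a * pp \<le> v" using v mu by (simp add: divide_le_0_iff mult_le_0_iff)
  hence "a \<le> v / pp" using pp by (simp add: field_simps)
  also have "v / pp = v powr (2-q)"
  proof -
    have "v powr (2-q) * pp = v powr ((2-q)+(q-1))" unfolding pp_def by (rule powr_add[symmetric])
    also have "\<dots> = v" using v by simp
    finally show ?thesis using pp by (simp add: field_simps)
  qed
  finally have "a \<le> v powr (2-q)" .
  hence "a powr (1/(2-q)) \<le> (v powr (2-q)) powr (1/(2-q))"
    using a_pos q1 by (intro powr_mono2) auto
  also have "\<dots> = v" using v q1 by (simp add: powr_powr)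
  finally show ?thesis by (simp add: eta_def')
qed

end
context prx begin
lemma big_uniq_aux:
  assumes z: "z > tau" and p1: "v1 \<in> prox_q lam mu q z" and p2: "v2 \<in> prox_q lam mu q z"
    and lt: "v1 < v2"
  shows False
proof -
  have e1: "v1 \<ge> eta" using big_pos[OF z p1] .
  have v1: "v1 > 0" using e1 eta_pos by simp
  have v2: "v2 > 0" using lt v1 by simp
  define p where "p = v1 powr (q-1)"
  define r where "r = v2 powr (q-1)"
  define D where "D = v2 - v1"
  have D: "D > 0" using lt by (simp add: D_def)
  have eq: "v1 + lam * mu * q * p = v2 + lam * mu * q * r"
    using stat[OF v1 p1] stat[OF v2 p2] by (simp add: p_def r_def)
  have t: "r - p \<ge> (q-1) * v1 powr (q-1-1) * D"
    using powr_tangent[of "q-1" v1 v2] q1 v1 v2 by (simp add: p_def r_def D_def)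
  have "q - 1 - 1 = q - 2" by simp
  hence "v1 powr (q-1-1) \<le> eta powr (q-2)"
    using e1 eta_pos q1 by (simp add: powr_mono2')
  hence s: "v1 powr (q-1-1) \<le> 1/a" by (simp add: eta_pow2)
  have "p - r \<le> (1-q) * v1 powr (q-1-1) * D" using t by (simp add: algebra_simps)
  also have "\<dots> \<le> (1-q) * (1/a) * D"
    using s q1 D by (intro mult_right_mono mult_left_mono) auto
  finally have pr: "p - r \<le> (1-q) * (1/a) * D" .
  have "D = lam * mu * q * (p - r)" using eq by (simp add: D_def algebra_simps)
  also have "\<dots> \<le> lam * mu * q * ((1-q) * (1/a) * D)"
    using pr lam mu q0 by (intro mult_left_mono) auto
  also have "\<dots> = q / 2 * D" using lam mu q1 by (simp add: a_def field_simps)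
  finally have "D \<le> q/2 * D" .
  moreover have "q/2 * D < 1 * D" using D q1 by (intro mult_strict_right_mono) auto
  ultimately show False by linarith
qed

lemma big_props:
  assumes z: "\<bar>z\<bar> > tau"
  shows "\<exists>!v. v \<in> prox_q lam mu q z" "\<And>v. v \<in> prox_q lam mu q z \<Longrightarrow> \<bar>v\<bar> \<ge> eta"
proof -
  have uq: "v1 = v2" if "z > tau" "v1 \<in> prox_q lam mu q z" "v2 \<in> prox_q lam mu q z" for z v1 v2
    using big_uniq_aux[OF that] big_uniq_aux[OF that(1,3,2)] by (cases v1 v2 rule: linorder_cases) auto
  have bp: "\<bar>v\<bar> \<ge> eta" if "v \<in> prox_q lam mu q z" for v
  proof (cases "z > 0")
    case True thus ?thesis using big_pos[of z v] z that eta_pos by auto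
  next
    case False
    hence "-z > tau" using z by auto
    thus ?thesis using big_pos[of "-z" "-v"] that prox_neg eta_pos by auto
  qed
  thus "\<And>v. v \<in> prox_q lam mu q z \<Longrightarrow> \<bar>v\<bar> \<ge> eta" by blast
  show "\<exists>!v. v \<in> prox_q lam mu q z"
  proof (cases "z > 0")
    case True thus ?thesis using prox_ex[of z] uq[of z] z by auto
  next
    case False
    hence mz: "-z > tau" using z by auto
    have "v1 = v2" if "v1 \<in> prox_q lam mu q z" "v2 \<in> prox_q lam mu q z" for v1 v2
      using uq[OF mz, of "-v1" "-v2"] that prox_neg by auto
    thus ?thesis using prox_ex[of z] by auto
  qed
qed

lemma Tq_props:
  shows "Tq lam mu q z w \<in> prox_q lam mu q z"
    and "Tq lam mu q z w = 0 \<or> \<bar>Tq lam mu q z w\<bar> \<ge> eta"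
proof -
  have "Tq lam mu q z w \<in> prox_q lam mu q z \<and> (Tq lam mu q z w = 0 \<or> \<bar>Tq lam mu q z w\<bar> \<ge> eta)"
  proof (cases "\<bar>z\<bar> < tau")
    case True
    hence "(THE v. v \<in> prox_q lam mu q z) = 0" by (simp add: small)
    thus ?thesis using True small[OF True] by (simp add: Tq_def)
  next
    case False
    show ?thesis
    proof (cases "\<bar>z\<bar> = tau")
      case True
      have "z \<noteq> 0" using True tau_pos by auto
      hence "\<bar>sgn z * eta\<bar> = eta" using eta_pos by (simp add: abs_mult abs_sgn_eq)
      thus ?thesis using tie[OF True] True by (auto simp: Tq_def)
    next
      case F2: False
      hence z: "\<bar>z\<bar> > tau" using False by auto
      have "(THE v. v \<in> prox_q lam mu q z) \<in> prox_q lam mu q z"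
        using big_props(1)[OF z] by (rule theI')
      thus ?thesis using big_props(2)[OF z] F2 by (simp add: Tq_def)
    qed
  qed
  thus "Tq lam mu q z w \<in> prox_q lam mu q z" "Tq lam mu q z w = 0 \<or> \<bar>Tq lam mu q z w\<bar> \<ge> eta"
    by auto
qed

end


definition Tobj :: "nat \<Rightarrow> nat \<Rightarrow> (nat \<Rightarrow> nat \<Rightarrow> real) \<Rightarrow> (nat \<Rightarrow> real) \<Rightarrow> real \<Rightarrow> real \<Rightarrow> (nat \<Rightarrow> real) \<Rightarrow> real" where
  "Tobj m N A y lam q v = (\<Sum>k<m. ((\<Sum>l<N. A k l * v l) - y k)^2) / 2 + lam * (\<Sum>j<N. \<bar>v j\<bar> powr q)"

lemma single_update_sum:
  fixes g :: "nat \<Rightarrow> real"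
  assumes "i < N" "\<And>l. l < N \<Longrightarrow> v' l = v l + (if l = i then d else 0)"
  shows "(\<Sum>l<N. g l * v' l) = (\<Sum>l<N. g l * v l) + g i * d"
proof -
  have "(\<Sum>l<N. g l * v' l) = (\<Sum>l<N. g l * v l + (if l = i then g i * d else 0))"
    using assms by (intro sum.cong) (auto simp: algebra_simps)
  also have "\<dots> = (\<Sum>l<N. g l * v l) + g i * d"
    using assms(1) by (simp add: sum.distrib)
  finally show ?thesis .
qed

lemma step_descent:
  assumes N: "N \<ge> 1" and lam: "lam > 0" and q0: "0 < q" and q1: "q < 1" and mu: "0 < mu"
    and G: "is_gaita m N A y lam q mu x"
  shows "Tobj m N A y lam q (x (Suc n)) + (1/mu - Lmax m N A)/2 * (x (Suc n) (n mod N) - x n (n mod N))^2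
           \<le> Tobj m N A y lam q (x n)"
proof -
  interpret P: prx lam mu q using lam mu q0 q1 by unfold_locales
  define i where "i = n mod N"
  have i: "i < N" using N by (simp add: i_def)
  define d where "d = x (Suc n) i - x n i"
  define r where "r k = (\<Sum>l<N. A k l * x n l) - y k" for k
  define g where "g = (\<Sum>k<m. A k i * r k)"
  define z where "z = x n i - mu * g"
  have upd: "x (Suc n) l = x n l + (if l = i then d else 0)" if "l < N" for l
    using G that unfolding is_gaita_def i_def d_def by auto
  have xi: "x (Suc n) i = Tq lam mu q z (x n i)"
    using G i unfolding is_gaita_def i_def z_def g_def r_def by auto
  have prox: "x (Suc n) i \<in> prox_q lam mu q z" using P.Tq_props(1) xi by simp
  hence pf: "(z - x (Suc n) i)^2 / (2*mu) + lam * \<bar>x (Suc n) i\<bar> powr q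
           \<le> (z - x n i)^2 / (2*mu) + lam * \<bar>x n i\<bar> powr q"
    by (simp add: prox_q_def)
  have "(z - x (Suc n) i)^2 / (2*mu) - (z - x n i)^2 / (2*mu) = d^2/(2*mu) + d * g"
    using mu by (simp add: z_def d_def field_simps power2_eq_square)
  hence pf2: "d^2/(2*mu) + d * g + lam * \<bar>x (Suc n) i\<bar> powr q \<le> lam * \<bar>x n i\<bar> powr q"
    using pf by linarith
  have res: "(\<Sum>l<N. A k l * x (Suc n) l) - y k = r k + A k i * d" for k
    using single_update_sum[OF i upd, of "A k"] by (simp add: r_def)
  have "(\<Sum>k<m. ((\<Sum>l<N. A k l * x (Suc n) l) - y k)^2)
        = (\<Sum>k<m. (r k)^2 + 2 * d * (A k i * r k) + d^2 * (A k i)^2)"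
    by (intro sum.cong) (auto simp: res power2_eq_square algebra_simps)
  also have "\<dots> = (\<Sum>k<m. (r k)^2) + 2 * d * g + d^2 * col_norm2 m A i"
    by (simp add: sum.distrib sum_distrib_left g_def col_norm2_def)
  finally have S1: "(\<Sum>k<m. ((\<Sum>l<N. A k l * x (Suc n) l) - y k)^2)
        = (\<Sum>k<m. (r k)^2) + 2 * d * g + d^2 * col_norm2 m A i" .
  have "(\<Sum>j<N. \<bar>x (Suc n) j\<bar> powr q) = (\<Sum>j<N. \<bar>x n j\<bar> powr q
           + (if j = i then \<bar>x (Suc n) i\<bar> powr q - \<bar>x n i\<bar> powr q else 0))"
    by (intro sum.cong) (auto simp: upd)
  also have "\<dots> = (\<Sum>j<N. \<bar>x n j\<bar> powr q) + (\<bar>x (Suc n) i\<bar> powr q - \<bar>x n i\<bar> powr q)"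
    using i by (simp add: sum.distrib)
  finally have S2: "(\<Sum>j<N. \<bar>x (Suc n) j\<bar> powr q)
     = (\<Sum>j<N. \<bar>x n j\<bar> powr q) + (\<bar>x (Suc n) i\<bar> powr q - \<bar>x n i\<bar> powr q)" .
  have L: "col_norm2 m A i \<le> Lmax m N A"
    unfolding Lmax_def using i by (intro Max_ge) auto
  have "d^2 * col_norm2 m A i \<le> d^2 * Lmax m N A" using L by (simp add: mult_left_mono)
  have rn: "(\<Sum>k<m. (r k)^2) = (\<Sum>k<m. ((\<Sum>l<N. A k l * x n l) - y k)^2)" by (simp add: r_def)
  have "(1/mu - Lmax m N A)/2 * d^2 = d^2/(2*mu) - d^2 * Lmax m N A / 2"
    using mu by (simp add: field_simps)
  have e1: "((\<Sum>k<m. (r k)^2) + 2 * d * g + d^2 * col_norm2 m A i) / 2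
      = (\<Sum>k<m. (r k)^2)/2 + d * g + d^2 * col_norm2 m A i / 2" by (simp add: field_simps)
  have e2: "lam * ((\<Sum>j<N. \<bar>x n j\<bar> powr q) + (\<bar>x (Suc n) i\<bar> powr q - \<bar>x n i\<bar> powr q))
      = lam * (\<Sum>j<N. \<bar>x n j\<bar> powr q) + lam * \<bar>x (Suc n) i\<bar> powr q - lam * \<bar>x n i\<bar> powr q"
    by (simp add: algebra_simps)
  have e3: "d^2 * col_norm2 m A i / 2 \<le> d^2 * Lmax m N A / 2"
    using \<open>d^2 * col_norm2 m A i \<le> d^2 * Lmax m N A\<close> by simp
  show ?thesis
    unfolding Tobj_def S1 S2 i_def[symmetric] d_def[symmetric] rn[symmetric] e1 e2
    using pf2 e3 \<open>(1/mu - Lmax m N A)/2 * d^2 = d^2/(2*mu) - d^2 * Lmax m N A / 2\<close>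
    by linarith
qed


lemma good_sgn:
  fixes a b e :: real
  assumes e: "e > 0" and a: "a = 0 \<or> \<bar>a\<bar> \<ge> e" and b: "b = 0 \<or> \<bar>b\<bar> \<ge> e" and ab: "\<bar>b - a\<bar> < e"
  shows "sgn b = sgn a"
proof -
  consider "a = 0" "b = 0" | "a = 0" "\<bar>b\<bar> \<ge> e" | "\<bar>a\<bar> \<ge> e" "b = 0" | "\<bar>a\<bar> \<ge> e" "\<bar>b\<bar> \<ge> e"
    using a b by blast
  thus ?thesis
  proof cases
    case 1 thus ?thesis by simp
  next
    case 2 thus ?thesis using ab by simp
  next
    case 3 thus ?thesis using ab by simp
  next
    case 4
    have "a > 0 \<and> b > 0 \<or> a < 0 \<and> b < 0" using 4 ab e by (cases "a \<ge> 0"; cases "b \<ge> 0") auto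
    thus ?thesis by auto
  qed
qed



theorem theorem3:
  fixes m N :: nat and A :: "nat \<Rightarrow> nat \<Rightarrow> real" and y :: "nat \<Rightarrow> real"
    and lam q mu :: real and x :: "nat \<Rightarrow> nat \<Rightarrow> real" and xs :: "nat \<Rightarrow> real"
  assumes "N \<ge> 1"
    and "lam > 0" and "0 < q" and "q < 1"
    and "0 < mu" and "mu < 1 / Lmax m N A"
    and "is_gaita m N A y lam q mu x"
    and "is_limit_point N x xs"
  shows "\<exists>nstar::nat. nstar > N \<and> (\<forall>n>nstar.
           (\<forall>j<N. x n j = 0 \<or> \<bar>x n j\<bar> \<ge> eta_mq lam mu q)
         \<and> supp N (x n) = supp N xs
         \<and> (\<forall>j<N. sgn (x n j) = sgn (xs j)))"
proof -
  note N = assms(1) and lam = assms(2) and q0 = assms(3) and q1 = assms(4) and mu = assms(5)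
    and muL = assms(6) and G = assms(7) and LP = assms(8)
  interpret P: prx lam mu q using lam mu q0 q1 by unfold_locales
  define eta where "eta = eta_mq lam mu q"
  have eta: "eta > 0" using P.eta_pos by (simp add: eta_def)
  define T where "T n = Tobj m N A y lam q (x n)" for n
  define c where "c = (1/mu - Lmax m N A)/2"
  define d where "d n = x (Suc n) (n mod N) - x n (n mod N)" for n
  have "1 / Lmax m N A > 0" using mu muL by linarith
  hence Lpos: "Lmax m N A > 0" by (simp add: zero_less_divide_iff)
  have "mu * Lmax m N A < 1" using muL Lpos by (simp add: field_simps)
  hence "1/mu > Lmax m N A" using mu by (simp add: field_simps)
  hence c: "c > 0" by (simp add: c_def)
  have stp: "T (Suc n) + c * (d n)^2 \<le> T n" for n
    using step_descent[OF N lam q0 q1 mu G, of n] by (simp add: T_def c_def d_def)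
  have Tnn: "T n \<ge> 0" for n
    unfolding T_def Tobj_def using lam by (intro add_nonneg_nonneg mult_nonneg_nonneg sum_nonneg divide_nonneg_pos) auto
  have tel: "T M + c * (\<Sum>n<M. (d n)^2) \<le> T 0" for M
  proof (induction M)
    case 0 show ?case by simp
  next
    case (Suc M)
    have "c * (\<Sum>n<Suc M. (d n)^2) = c * (\<Sum>n<M. (d n)^2) + c * (d M)^2"
      by (simp add: distrib_left)
    thus ?case using Suc stp[of M] by linarith
  qed
  have "summable (\<lambda>n. (d n)^2)"
  proof (rule summableI_nonneg_bounded)
    fix M
    have "c * (\<Sum>n<M. (d n)^2) \<le> T 0" using tel[of M] Tnn[of M] by linarith
    thus "(\<Sum>n<M. (d n)^2) \<le> T 0 / c" using c by (simp add: field_simps)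
  qed simp
  hence dlim: "(\<lambda>n. (d n)^2) \<longlonglongrightarrow> 0" by (rule summable_LIMSEQ_zero)
  have "eventually (\<lambda>n. (d n)^2 < eta^2) sequentially"
    using order_tendstoD(2)[OF dlim, of "eta^2"] eta by simp
  then obtain K0 where K0: "\<And>n. n \<ge> K0 \<Longrightarrow> (d n)^2 < eta^2"
    by (auto simp: eventually_sequentially)
  define K where "K = max K0 N"
  have KN: "K \<ge> N" by (simp add: K_def)
  have diff: "\<bar>x (Suc n) j - x n j\<bar> < eta" if "n \<ge> K" "j < N" for n j
  proof -
    have "(d n)^2 < eta^2" using K0 that by (simp add: K_def)
    hence "\<bar>d n\<bar>^2 < eta^2" by simp
    hence dn: "\<bar>d n\<bar> < eta" using power_less_imp_less_base[of "\<bar>d n\<bar>" 2 eta] eta by linarith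
    show ?thesis
    proof (cases "j = n mod N")
      case True thus ?thesis using dn by (simp add: d_def)
    next
      case False
      hence "x (Suc n) j = x n j" using G that(2) unfolding is_gaita_def by auto
      thus ?thesis using eta by simp
    qed
  qed
  have good0: "\<forall>j<N. j < n \<longrightarrow> (x n j = 0 \<or> \<bar>x n j\<bar> \<ge> eta)" for n
  proof (induction n)
    case 0 show ?case by simp
  next
    case (Suc n)
    show ?case
    proof (intro allI impI)
      fix j assume j: "j < N" "j < Suc n"
      show "x (Suc n) j = 0 \<or> \<bar>x (Suc n) j\<bar> \<ge> eta"
      proof (cases "j = n mod N")
        case True
        hence "x (Suc n) j = Tq lam mu q (x n j - mu * (\<Sum>k<m. A k j * ((\<Sum>l<N. A k l * x n l) - y k))) (x n j)"
          using G j unfolding is_gaita_def by auto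
        thus ?thesis using P.Tq_props(2) by (simp add: eta_def)
      next
        case False
        hence eq: "x (Suc n) j = x n j" using G j unfolding is_gaita_def by auto
        have "j < n"
        proof (cases "n < N")
          case True hence "n mod N = n" by simp
          thus ?thesis using False j by simp
        next
          case False thus ?thesis using j by simp
        qed
        thus ?thesis using Suc.IH j eq by simp
      qed
    qed
  qed
  have good: "x n j = 0 \<or> \<bar>x n j\<bar> \<ge> eta" if "n \<ge> N" "j < N" for n j
    using good0[of n] that by auto
  have sgnK: "sgn (x n j) = sgn (x K j)" if "n \<ge> K" "j < N" for n j
    using that(1)
  proof (induction n rule: dec_induct)
    case base show ?case by simp
  next
    case (step n)
    have "sgn (x (Suc n) j) = sgn (x n j)"
      using good_sgn[OF eta good[of n j] good[of "Suc n" j] diff[of n j]] step.hyps KN that(2) by simp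
    thus ?case using step.IH by simp
  qed
  obtain r where r: "strict_mono r" "\<And>j. j < N \<Longrightarrow> (\<lambda>k. x (r k) j) \<longlonglongrightarrow> xs j"
    using LP unfolding is_limit_point_def by blast
  have rK: "sgn (x (r k) j) = sgn (x K j)" if "k \<ge> K" "j < N" for k j
    using sgnK[of "r k" j] seq_suble[OF r(1), of k] that by simp
  have lim: "sgn (xs j) = sgn (x K j)" if j: "j < N" for j
  proof -
    have gK: "x K j = 0 \<or> \<bar>x K j\<bar> \<ge> eta" using good[OF KN j] .
    have gr: "x (r k) j = 0 \<or> \<bar>x (r k) j\<bar> \<ge> eta" if "k \<ge> K" for k
      using good[of "r k" j] seq_suble[OF r(1), of k] that KN j by simp
    consider "x K j = 0" | "x K j > 0" | "x K j < 0" by linarith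
    thus ?thesis
    proof cases
      case 1
      hence "eventually (\<lambda>k. x (r k) j = 0) sequentially"
        using rK[OF _ j] unfolding eventually_sequentially by (auto simp: sgn_0_0)
      hence "(\<lambda>k. x (r k) j) \<longlonglongrightarrow> 0" by (rule tendsto_eventually)
      hence "xs j = 0" using r(2)[OF j] LIMSEQ_unique by blast
      thus ?thesis using 1 by simp
    next
      case 2
      have "\<forall>k\<ge>K. eta \<le> x (r k) j"
      proof (intro allI impI)
        fix k assume k: "k \<ge> K"
        have "sgn (x (r k) j) = 1" using rK[OF k j] 2 by simp
        hence "x (r k) j > 0" by (simp add: sgn_1_pos)
        thus "eta \<le> x (r k) j" using gr[OF k] by auto
      qed
      hence "eta \<le> xs j" using r(2)[OF j] by (intro LIMSEQ_le_const) auto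
      thus ?thesis using 2 eta by simp
    next
      case 3
      have "\<forall>k\<ge>K. x (r k) j \<le> -eta"
      proof (intro allI impI)
        fix k assume k: "k \<ge> K"
        have "sgn (x (r k) j) = -1" using rK[OF k j] 3 by simp
        hence "x (r k) j < 0" by (simp add: sgn_1_neg)
        thus "x (r k) j \<le> -eta" using gr[OF k] by auto
      qed
      hence "xs j \<le> -eta" using r(2)[OF j] by (intro LIMSEQ_le_const2) auto
      thus ?thesis using 3 eta by simp
    qed
  qed
  have main: "(\<forall>j<N. x n j = 0 \<or> \<bar>x n j\<bar> \<ge> eta_mq lam mu q)
         \<and> supp N (x n) = supp N xs
         \<and> (\<forall>j<N. sgn (x n j) = sgn (xs j))" if n: "n > Suc K" for n
  proof (intro conjI)
    show "\<forall>j<N. x n j = 0 \<or> \<bar>x n j\<bar> \<ge> eta_mq lam mu q"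
      using good[of n] n KN by (simp add: eta_def)
    have sg: "sgn (x n j) = sgn (xs j)" if "j < N" for j
      using sgnK[of n j] lim[OF that] n that by simp
    thus "\<forall>j<N. sgn (x n j) = sgn (xs j)" by blast
    have "x n j \<noteq> 0 \<longleftrightarrow> xs j \<noteq> 0" if "j < N" for j
      using sg[OF that] by (metis sgn_0_0)
    thus "supp N (x n) = supp N xs"
      unfolding supp_def by blast
  qed
  show ?thesis using KN main by (intro exI[of _ "Suc K"]) auto
qed

end
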